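(* In the setting described in the context, let $p$ be a facet of $\Delta_\lambda$ of $\mathbf a$-degree at least $1$, with its nodes labelled $1,\dots,k-1$ so that $p$ is identified with the simplex on $[k-1]$. If $[k-1]\setminus L$ is a facet of $F_{<p}\cap p$, where $L$ is a set of consecutive indices, then $|L|\le 2$.
   Context: Let $n,d\ge2$, $V(n,d)=\{\mathbf b\in\mathbb N^n:\sum_i b_i=d\}$, and let $\mathbf a\in V(n,d)$ satisfy $a_1\le\dots\le a_n$ and $\mathbf a\notin\{(0,\dots,0,d),(0,\dots,0,1,d-1),(0,\dots,0,2,d-2)\}$. Let $\Gamma=V(n,d)\setminus\{\mathbf a\}$ and assume $\Gamma+\Gamma=V(n,2d)$. Order $V(n,d)$ lexicographically ($b<c$ iff the first nonzero coordinate of $c-b$ is positive). Let $\lambda$ be in the semigroup generated by $\Gamma$, $k=|\lambda|=(\sum_i\lambda_i)/d$. A closed chain from $0$ to $\lambda$ is a sequence $0=v_0,v_1,\dots,v_k=\lambda$ in $\mathbb N^n$ with all links $v_j-v_{j-1}\in V(n,d)$; its $\mathbf a$-degree is the number of links equal to $\mathbf a$; its open chain is $\{v_1,\dots,v_{k-1}\}$, with $v_j$ labelled $j$. $\Delta_\lambda$ is the simplicial complex whose facets are all these open chains. Facets are ordered: $q<p$ iff $\mathbf a$-degree of $q$ is smaller than that of $p$, or equal and the link sequence of $q$ is lexicographically smaller than that of $p$ (first links compared first, using the order on $V(n,d)$). $F_{<p}$ is the subcomplex of $\Delta_\lambda$ generated by the facets $q<p$; $p$ also denotes the full simplex on its nodes.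 *)

theory Defs
  imports Main
begin

text \<open>Vectors in N^n are functions nat => nat vanishing from index n on
  (coordinate i of the paper is index i-1 here).\<close>

definition Vnd :: "nat \<Rightarrow> nat \<Rightarrow> (nat \<Rightarrow> nat) set" where
  "Vnd n d = {b. (\<forall>i\<ge>n. b i = 0) \<and> (\<Sum>i<n. b i) = d}"

definition vadd :: "(nat \<Rightarrow> nat) \<Rightarrow> (nat \<Rightarrow> nat) \<Rightarrow> (nat \<Rightarrow> nat)" where
  "vadd x y = (\<lambda>i. x i + y i)"

definition lex_less :: "nat \<Rightarrow> (nat \<Rightarrow> nat) \<Rightarrow> (nat \<Rightarrow> nat) \<Rightarrow> bool" where
  "lex_less n b c = (\<exists>i<n. (\<forall>j<i. b j = c j) \<and> b i < c i)"

definition gen_semigroup :: "(nat \<Rightarrow> nat) set \<Rightarrow> (nat \<Rightarrow> nat) set" where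
  "gen_semigroup G = {(\<lambda>i. \<Sum>g\<leftarrow>gs. g i) | gs. gs \<noteq> [] \<and> set gs \<subseteq> G}"

text \<open>A closed chain is given by its list of links; node j is the sum of the first j links.\<close>
definition node :: "(nat \<Rightarrow> nat) list \<Rightarrow> nat \<Rightarrow> (nat \<Rightarrow> nat)" where
  "node ls j = (\<lambda>i. \<Sum>l\<leftarrow>take j ls. l i)"

definition is_chain :: "nat \<Rightarrow> nat \<Rightarrow> (nat \<Rightarrow> nat) \<Rightarrow> (nat \<Rightarrow> nat) list \<Rightarrow> bool" where
  "is_chain n d lam ls = (set ls \<subseteq> Vnd n d \<and> node ls (length ls) = lam)"

definition open_chain :: "(nat \<Rightarrow> nat) list \<Rightarrow> (nat \<Rightarrow> nat) set" where
  "open_chain ls = {node ls j | j. 1 \<le> j \<and> j \<le> length ls - 1}"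

definition adeg :: "(nat \<Rightarrow> nat) \<Rightarrow> (nat \<Rightarrow> nat) list \<Rightarrow> nat" where
  "adeg a ls = count_list ls a"

fun seq_less :: "nat \<Rightarrow> (nat \<Rightarrow> nat) list \<Rightarrow> (nat \<Rightarrow> nat) list \<Rightarrow> bool" where
  "seq_less n (x # xs) (y # ys) = (lex_less n x y \<or> (x = y \<and> seq_less n xs ys))"
| "seq_less n _ _ = False"

definition facet_less :: "nat \<Rightarrow> (nat \<Rightarrow> nat) \<Rightarrow> (nat \<Rightarrow> nat) list \<Rightarrow> (nat \<Rightarrow> nat) list \<Rightarrow> bool" where
  "facet_less n a q p = (adeg a q < adeg a p \<or> (adeg a q = adeg a p \<and> seq_less n q p))"

text \<open>Faces of F_{<p} \<inter> p: subsets of the nodes of p contained in some facet q < p.\<close>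
definition face_Fless_cap :: "nat \<Rightarrow> nat \<Rightarrow> (nat \<Rightarrow> nat) \<Rightarrow> (nat \<Rightarrow> nat) \<Rightarrow> (nat \<Rightarrow> nat) list
    \<Rightarrow> (nat \<Rightarrow> nat) set \<Rightarrow> bool" where
  "face_Fless_cap n d a lam p S = (S \<subseteq> open_chain p \<and>
     (\<exists>q. is_chain n d lam q \<and> facet_less n a q p \<and> S \<subseteq> open_chain q))"

definition facet_Fless_cap :: "nat \<Rightarrow> nat \<Rightarrow> (nat \<Rightarrow> nat) \<Rightarrow> (nat \<Rightarrow> nat) \<Rightarrow> (nat \<Rightarrow> nat) list
    \<Rightarrow> (nat \<Rightarrow> nat) set \<Rightarrow> bool" where
  "facet_Fless_cap n d a lam p S = (face_Fless_cap n d a lam p S \<and>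
     (\<forall>T. face_Fless_cap n d a lam p T \<and> S \<subseteq> T \<longrightarrow> T = S))"

end

theory Submission
  imports Defs
begin

definition vsum :: "(nat \<Rightarrow> nat) list \<Rightarrow> nat \<Rightarrow> nat" where
  "vsum ls = (\<lambda>i. \<Sum>l\<leftarrow>ls. l i)"

lemma node_vsum: "node ls j = vsum (take j ls)"
  by (simp add: node_def vsum_def)

lemma vsum_Nil[simp]: "vsum [] i = 0"
  by (simp add: vsum_def)

lemma vsum_Cons[simp]: "vsum (l # ls) i = l i + vsum ls i"
  by (simp add: vsum_def)

lemma vsum_append[simp]: "vsum (xs @ ys) i = vsum xs i + vsum ys i"
  by (simp add: vsum_def)

lemma Vnd_zero: "x \<in> Vnd n d \<Longrightarrow> n \<le> k \<Longrightarrow> x k = 0"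
  by (simp add: Vnd_def)

lemma Vnd_sum: "x \<in> Vnd n d \<Longrightarrow> (\<Sum>i<n. x i) = d"
  by (simp add: Vnd_def)

lemma Vnd_I: "(\<And>k. n \<le> k \<Longrightarrow> x k = 0) \<Longrightarrow> (\<Sum>i<n. x i) = d \<Longrightarrow> x \<in> Vnd n d"
  by (simp add: Vnd_def)

lemma vsum_Vnd: "set ls \<subseteq> Vnd n d \<Longrightarrow> vsum ls \<in> Vnd n (length ls * d)"
proof (induction ls)
  case Nil
  then show ?case by (simp add: Vnd_def vsum_def)
next
  case (Cons l ls)
  then have l: "l \<in> Vnd n d" and ih: "vsum ls \<in> Vnd n (length ls * d)" by auto
  show ?case
  proof (rule Vnd_I)
    fix k assume "n \<le> k" then show "vsum (l # ls) k = 0"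
      using Vnd_zero[OF l] Vnd_zero[OF ih] by simp
  next
    have "(\<Sum>i<n. vsum (l # ls) i) = (\<Sum>i<n. l i) + (\<Sum>i<n. vsum ls i)"
      by (simp add: sum.distrib)
    also have "\<dots> = d + length ls * d" using Vnd_sum[OF l] Vnd_sum[OF ih] by simp
    finally show "(\<Sum>i<n. vsum (l # ls) i) = length (l # ls) * d" by simp
  qed
qed

lemma vsum_mem_le: "x \<in> set ls \<Longrightarrow> x k \<le> vsum ls k"
  by (induction ls) auto

lemma vadd_Vnd: "x \<in> Vnd n d \<Longrightarrow> y \<in> Vnd n e \<Longrightarrow> vadd x y \<in> Vnd n (d + e)"
  unfolding Vnd_def vadd_def by (auto simp: sum.distrib)

lemma node_append3:
  "node (A @ X @ B) l i = node A l i + node X (l - length A) i + node B (l - length A - length X) i"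
  by (simp add: node_vsum)

lemma lex_irrefl: "\<not> lex_less n x x"
  by (simp add: lex_less_def)

lemma seq_less_irrefl: "\<not> seq_less n xs xs"
  by (induction xs) (auto simp: lex_irrefl)

lemma seq_less_prefix: "seq_less n (A @ xs) (A @ ys) = seq_less n xs ys"
  by (induction A) (auto simp: lex_irrefl)

lemma seq_less_suffix: "length xs = length ys \<Longrightarrow> seq_less n (xs @ B) (ys @ B) = seq_less n xs ys"
proof (induction xs arbitrary: ys)
  case Nil
  then show ?case by (simp add: seq_less_irrefl)
next
  case (Cons x xs)
  then obtain y ys' where "ys = y # ys'" by (cases ys) auto
  with Cons show ?case by auto
qed

lemma seq_less_mid: "length X = length Y \<Longrightarrow> seq_less n (A @ X @ B) (A @ Y @ B) = seq_less n X Y"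
  by (simp add: seq_less_prefix seq_less_suffix flip: append_assoc)

lemma mass_eq_length:
  assumes "set p \<subseteq> Vnd n d" "set q \<subseteq> Vnd n d" "vsum p = vsum q" "d > 0"
  shows "length p = length q"
proof -
  have "vsum p \<in> Vnd n (length p * d)" "vsum q \<in> Vnd n (length q * d)"
    using vsum_Vnd assms by blast+
  then have "length p * d = length q * d" using assms(3) by (simp add: Vnd_def)
  then show ?thesis using assms(4) by simp
qed

lemma node_Vnd:
  assumes "set ls \<subseteq> Vnd n d" "l \<le> length ls"
  shows "node ls l \<in> Vnd n (l * d)"
proof -
  have "set (take l ls) \<subseteq> Vnd n d" using set_take_subset[of l ls] assms(1) by blast
  from vsum_Vnd[OF this] have "vsum (take l ls) \<in> Vnd n (length (take l ls) * d)" .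
  moreover have "length (take l ls) = l" using assms(2) by simp
  ultimately show ?thesis by (simp add: node_vsum)
qed

lemma node_inj:
  assumes "set ls \<subseteq> Vnd n d" "set ms \<subseteq> Vnd n d" "l \<le> length ls" "l' \<le> length ms"
    "node ls l = node ms l'" "d > 0"
  shows "l = l'"
proof -
  have "node ls l \<in> Vnd n (l*d)" "node ms l' \<in> Vnd n (l'*d)" using node_Vnd assms by blast+
  then have "l * d = l' * d" using assms(5) by (simp add: Vnd_def)
  then show ?thesis using assms(6) by simp
qed



lemma sum_one_point:
  fixes f :: "nat \<Rightarrow> nat" and n j :: nat
  assumes "\<forall>k. k \<noteq> j \<longrightarrow> f k = 0" "j < n"
  shows "(\<Sum>i<n. f i) = f j"
proof -
  have "(\<Sum>i<n. f i) = (\<Sum>i<n. if i = j then f j else 0)"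
    by (rule sum.cong) (use assms in auto)
  also have "\<dots> = f j" using assms(2) by (simp add: sum.delta')
  finally show ?thesis .
qed

lemma sum_two_point:
  fixes f :: "nat \<Rightarrow> nat" and n p q :: nat
  assumes "\<forall>k. k \<noteq> p \<and> k \<noteq> q \<longrightarrow> f k = 0" "p < n" "q < n" "p \<noteq> q"
  shows "(\<Sum>i<n. f i) = f p + f q"
proof -
  have "(\<Sum>i<n. f i) = (\<Sum>i<n. (if i = p then f p else 0) + (if i = q then f q else 0))"
    by (rule sum.cong) (use assms in auto)
  also have "\<dots> = f p + f q" using assms(2,3) by (simp add: sum.distrib sum.delta')
  finally show ?thesis .
qed

lemma sum_ind: "s < (n::nat) \<Longrightarrow> (\<Sum>k<n. if k = s then c else 0) = (c::nat)"
  by (simp add: sum.delta')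

lemma sum_shift:
  fixes x a f g :: "nat \<Rightarrow> nat" and n :: nat
  assumes "\<forall>k. x k + f k = a k + g k" "(\<Sum>k<n. f k) = (\<Sum>k<n. g k)"
  shows "(\<Sum>k<n. x k) = (\<Sum>k<n. a k)"
proof -
  have "(\<Sum>k<n. x k) + (\<Sum>k<n. f k) = (\<Sum>k<n. a k) + (\<Sum>k<n. g k)"
    using assms(1) by (simp add: sum.distrib[symmetric])
  then show ?thesis using assms(2) by simp
qed

locale AS =
  fixes n d :: nat and A :: "nat \<Rightarrow> nat"
  assumes n2: "n \<ge> 2" and d2: "d \<ge> 2" and AV: "A \<in> Vnd n d"
    and mono: "\<forall>s t. s \<le> t \<and> t < n \<longrightarrow> A s \<le> A t"
    and ex1: "A \<noteq> (\<lambda>s. if s = n - 1 then d else 0)"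
    and ex2: "A \<noteq> (\<lambda>s. if s = n - 2 then 1 else if s = n - 1 then d - 1 else 0)"
    and ex3: "A \<noteq> (\<lambda>s. if s = n - 2 then 2 else if s = n - 1 then d - 2 else 0)"
    and GG: "{vadd x y | x y. x \<in> Vnd n d - {A} \<and> y \<in> Vnd n d - {A}} = Vnd n (2 * d)"
begin

lemma E1:
  assumes "\<forall>k. k \<noteq> j \<longrightarrow> A k = 0"
  shows False
proof -
  have s: "(\<Sum>i<n. A i) = d" using AV by (simp add: Vnd_def)
  show False
  proof (cases "j < n")
    case False
    then have "(\<Sum>i<n. A i) = 0" using assms by auto
    then show False using s d2 by simp
  next
    case True
    then have Aj: "A j = d" using sum_one_point[OF assms True] s by simp
    show False
    proof (cases "j = n - 1")
      case True
      have "A = (\<lambda>s. if s = n - 1 then d else 0)"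
        using assms Aj True by (auto intro!: ext)
      then show False using ex1 by simp
    next
      case False
      then have "j < n - 1" using \<open>j < n\<close> by simp
      then have "A j \<le> A (n - 1)" using mono n2 by auto
      moreover have "A (n - 1) = 0" using assms \<open>j < n - 1\<close> by auto
      ultimately show False using Aj d2 by simp
    qed
  qed
qed

lemma E2:
  assumes "p \<le> q" "\<forall>k. k \<noteq> p \<and> k \<noteq> q \<longrightarrow> A k = 0" "A q \<le> 2"
  shows False
proof -
  have s: "(\<Sum>i<n. A i) = d" using AV by (simp add: Vnd_def)
  show False
  proof (cases "p = q \<or> A p = 0")
    case True
    have "\<forall>k. k \<noteq> q \<longrightarrow> A k = 0" using True assms(2) by metis
    then show False using E1[of q] by blast
  next
    case False
    then have pq: "p < q" and Ap: "A p \<ge> 1" using assms(1) by auto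
    show False
    proof (cases "q < n")
      case False
      then have "A q = 0" using AV by (simp add: Vnd_def)
      then show False using E1[of p] assms(2) by auto
    next
      case qn: True
      have q1: "q = Suc p"
      proof (rule ccontr)
        assume "q \<noteq> Suc p"
        then have "Suc p < q" using pq by simp
        then have "A p \<le> A (Suc p)" using mono qn by auto
        moreover have "A (Suc p) = 0" using assms(2) \<open>Suc p < q\<close> by auto
        ultimately show False using Ap by simp
      qed
      have q2: "q = n - 1"
      proof (rule ccontr)
        assume "q \<noteq> n - 1"
        then have "q < n - 1" using qn by simp
        then have "A q \<le> A (n - 1)" using mono n2 by auto
        moreover have "A (n - 1) = 0" using assms(2) \<open>q < n - 1\<close> pq by auto
        moreover have "A p \<le> A q" using mono pq qn by auto
        ultimately show False using Ap by simp
      qed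
      have p2: "p = n - 2" using q1 q2 n2 by simp
      have sum2: "A p + A q = d" using sum_two_point[OF assms(2)] pq qn s by simp
      have "A p \<le> A q" using mono pq qn by auto
      then have "A p = 1 \<or> A p = 2" using Ap assms(3) by auto
      then show False
      proof
        assume "A p = 1"
        then have "A = (\<lambda>s. if s = n - 2 then 1 else if s = n - 1 then d - 1 else 0)"
          using assms(2) p2 q2 sum2 by (auto intro!: ext)
        then show False using ex2 by simp
      next
        assume "A p = 2"
        then have "A = (\<lambda>s. if s = n - 2 then 2 else if s = n - 1 then d - 2 else 0)"
          using assms(2) p2 q2 sum2 by (auto intro!: ext)
        then show False using ex3 by simp
      qed
    qed
  qed
qed

lemma mu_props:
  assumes "x \<in> Vnd n d"
  shows "0 < x (LEAST k. 0 < x k)" "(LEAST k. 0 < x k) < n" "\<forall>k<(LEAST k. 0 < x k). x k = 0"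
proof -
  have "\<exists>k. 0 < x k"
  proof (rule ccontr)
    assume "\<not> (\<exists>k. 0 < x k)"
    then have "(\<Sum>i<n. x i) = 0" by simp
    then show False using assms d2 by (simp add: Vnd_def)
  qed
  then show 1: "0 < x (LEAST k. 0 < x k)" by (rule LeastI_ex)
  show "(LEAST k. 0 < x k) < n"
  proof (rule ccontr)
    assume "\<not> (LEAST k. 0 < x k) < n"
    then have "x (LEAST k. 0 < x k) = 0" using assms by (simp add: Vnd_def)
    then show False using 1 by simp
  qed
  show "\<forall>k<(LEAST k. 0 < x k). x k = 0" using not_less_Least by blast
qed

context
  fixes a Dv :: "nat \<Rightarrow> nat" and \<mu> :: nat
  assumes aV: "a \<in> Vnd n d" and Dz: "\<forall>k\<ge>n. Dv k = 0"
    and H: "\<forall>x\<in>Vnd n d. (\<forall>k. x k \<le> a k + Dv k) \<and> lex_less n x a \<longrightarrow> x = A"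
    and mu: "\<mu> = (LEAST k. 0 < a k)"
begin

lemma mu0: "0 < a \<mu>"
  unfolding mu by (rule mu_props(1)[OF aV])
lemma mun: "\<mu> < n"
  unfolding mu by (rule mu_props(2)[OF aV])
lemma mub: "\<forall>k<\<mu>. a k = 0"
  unfolding mu by (rule mu_props(3)[OF aV])

lemma Happ: "x \<in> Vnd n d \<Longrightarrow> (\<forall>k. x k \<le> a k + Dv k) \<Longrightarrow> lex_less n x a \<Longrightarrow> x = A"
  using H by blast

lemma Dn: "1 \<le> Dv j \<Longrightarrow> j < n"
  using Dz by (cases "j < n") auto

lemma K1:
  assumes "\<mu> < j" "1 \<le> Dv j"
  shows "A = (\<lambda>k. a k - (if k = \<mu> then 1 else 0) + (if k = j then 1 else 0))"
proof -
  let ?x = "\<lambda>k. a k - (if k = \<mu> then 1 else 0) + (if k = j then 1 else 0)"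
  have jn: "j < n" using Dn assms(2) .
  have "?x \<in> Vnd n d"
  proof (rule Vnd_I)
    fix k assume "n \<le> k" then show "?x k = 0" using aV jn mun by (simp add: Vnd_def)
  next
    have "(\<Sum>k<n. ?x k) = (\<Sum>k<n. a k)"
      by (rule sum_shift[where f="\<lambda>k. if k = \<mu> then 1 else 0" and g="\<lambda>k. if k = j then 1 else 0"])
        (use mu0 assms(1) mun jn in \<open>auto simp: sum.delta'\<close>)
    then show "(\<Sum>k<n. ?x k) = d" using aV by (simp add: Vnd_def)
  qed
  moreover have "\<forall>k. ?x k \<le> a k + Dv k" using assms by auto
  moreover have "lex_less n ?x a"
    unfolding lex_less_def using mun mu0 assms(1) by (intro exI[of _ \<mu>]) auto
  ultimately have "?x = A" by (rule Happ)
  then show ?thesis by simp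
qed

lemma K4:
  assumes "\<mu> < s" "s < j" "1 \<le> Dv j"
  shows "a s = 0"
proof (rule ccontr)
  assume as: "a s \<noteq> 0"
  let ?x = "\<lambda>k. a k - (if k = s then 1 else 0) + (if k = j then 1 else 0)"
  have jn: "j < n" using Dn assms(3) .
  have sn: "s < n" using jn assms by simp
  have "?x \<in> Vnd n d"
  proof (rule Vnd_I)
    fix k assume "n \<le> k" then show "?x k = 0" using aV jn sn by (simp add: Vnd_def)
  next
    have "(\<Sum>k<n. ?x k) = (\<Sum>k<n. a k)"
      by (rule sum_shift[where f="\<lambda>k. if k = s then 1 else 0" and g="\<lambda>k. if k = j then 1 else 0"])
        (use as assms sn jn in \<open>auto simp: sum.delta'\<close>)
    then show "(\<Sum>k<n. ?x k) = d" using aV by (simp add: Vnd_def)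
  qed
  moreover have "\<forall>k. ?x k \<le> a k + Dv k" using assms by auto
  moreover have "lex_less n ?x a"
    unfolding lex_less_def using sn as assms by (intro exI[of _ s]) auto
  ultimately have xA: "?x = A" by (rule Happ)
  have "A = (\<lambda>k. a k - (if k = \<mu> then 1 else 0) + (if k = j then 1 else 0))"
    using K1[of j] assms(1,2,3) by simp
  with xA have eq: "?x = (\<lambda>k. a k - (if k = \<mu> then 1 else 0) + (if k = j then 1 else 0))"
    by simp
  have "?x \<mu> = a \<mu> - 1" using fun_cong[OF eq, of \<mu>] assms(1,2) by simp
  then show False using assms(1,2) mu0 by simp
qed

lemma K2:
  assumes "\<mu> < j" "1 \<le> Dv j" "\<mu> < j'" "1 \<le> Dv j'"
  shows "j = j'"
proof -
  have "(\<lambda>k. a k - (if k = \<mu> then 1 else 0) + (if k = j then 1 else 0))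
      = (\<lambda>k. a k - (if k = \<mu> then 1 else 0) + (if k = j' then 1 else 0))"
    using K1[OF assms(1,2)] K1[OF assms(3,4)] by simp
  from fun_cong[OF this, of j] show ?thesis by (auto split: if_splits)
qed

lemma K3:
  assumes "\<mu> < j" "1 \<le> Dv j"
  shows "Dv j \<le> 1"
proof (rule ccontr)
  assume "\<not> Dv j \<le> 1"
  then have D2: "2 \<le> Dv j" by simp
  have jn: "j < n" using Dn assms(2) .
  have AK: "A = (\<lambda>k. a k - (if k = \<mu> then 1 else 0) + (if k = j then 1 else 0))"
    using K1 assms by simp
  show False
  proof (cases "2 \<le> a \<mu>")
    case True
    let ?x = "\<lambda>k. a k - (if k = \<mu> then 2 else 0) + (if k = j then 2 else 0)"
    have "?x \<in> Vnd n d"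
    proof (rule Vnd_I)
      fix k assume "n \<le> k" then show "?x k = 0" using aV jn mun by (simp add: Vnd_def)
    next
      have "(\<Sum>k<n. ?x k) = (\<Sum>k<n. a k)"
        by (rule sum_shift[where f="\<lambda>k. if k = \<mu> then 2 else 0" and g="\<lambda>k. if k = j then 2 else 0"])
          (use True assms(1) mun jn in \<open>auto simp: sum.delta'\<close>)
      then show "(\<Sum>k<n. ?x k) = d" using aV by (simp add: Vnd_def)
    qed
    moreover have "\<forall>k. ?x k \<le> a k + Dv k" using assms D2 by auto
    moreover have "lex_less n ?x a"
      unfolding lex_less_def using mun True assms(1) by (intro exI[of _ \<mu>]) auto
    ultimately have xA: "?x = A" by (rule Happ)
    have "?x \<mu> = A \<mu>" by (rule fun_cong[OF xA])
    then show False using AK True assms(1) by simp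
  next
    case False
    then have a1: "a \<mu> = 1" using mu0 by simp
    show False
    proof (cases "\<exists>k>j. 0 < a k")
      case True
      then obtain k where kj: "j < k" and ak: "0 < a k" by blast
      have kn: "k < n" using ak aV by (metis Vnd_zero leI less_irrefl)
      let ?x = "\<lambda>k'. a k' - (if k' = \<mu> then 1 else 0) - (if k' = k then 1 else 0) + (if k' = j then 2 else 0)"
      have "?x \<in> Vnd n d"
      proof (rule Vnd_I)
        fix k' assume "n \<le> k'" then show "?x k' = 0" using aV jn mun by (simp add: Vnd_def)
      next
        have "(\<Sum>k<n. ?x k) = (\<Sum>k<n. a k)"
          by (rule sum_shift[where f="\<lambda>k'. (if k' = \<mu> then 1 else 0) + (if k' = k then 1 else 0)"
                and g="\<lambda>k'. if k' = j then 2 else 0"])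
            (use a1 ak kj assms(1) mun jn kn in \<open>auto simp: sum.delta' sum.distrib\<close>)
        then show "(\<Sum>k<n. ?x k) = d" using aV by (simp add: Vnd_def)
      qed
      moreover have "\<forall>k. ?x k \<le> a k + Dv k" using assms D2 by auto
      moreover have "lex_less n ?x a"
        unfolding lex_less_def using mun a1 assms(1) kj by (intro exI[of _ \<mu>]) auto
      ultimately have xA: "?x = A" by (rule Happ)
      have "?x k = A k" by (rule fun_cong[OF xA])
      then show False using AK kj assms(1) ak by simp
    next
      case False
      have "\<forall>k. k \<noteq> j \<longrightarrow> A k = 0"
      proof (intro allI impI)
        fix k assume kj: "k \<noteq> j"
        have "k < \<mu> \<or> k = \<mu> \<or> (\<mu> < k \<and> k < j) \<or> j < k" using kj by linarith
        then show "A k = 0"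
        proof (elim disjE)
          assume "k < \<mu>" then show ?thesis using AK mub kj by simp
        next
          assume "k = \<mu>" then show ?thesis using AK a1 kj by simp
        next
          assume "\<mu> < k \<and> k < j" then show ?thesis using AK K4[of k j] assms kj by simp
        next
          assume "j < k" then show ?thesis using AK False kj assms(1) by auto
        qed
      qed
      then show False using E1 by blast
    qed
  qed
qed


end


lemma surplus_gt:
  assumes "lex_less n b a1" "a1 \<in> Vnd n d" "a1 t < b t"
  shows "(LEAST k. 0 < a1 k) < t"
proof -
  obtain i where i: "i < n" "\<forall>j<i. b j = a1 j" "b i < a1 i"
    using assms(1) unfolding lex_less_def by blast
  have "i < t"
  proof (rule ccontr)
    assume "\<not> i < t"
    then have "t < i \<or> t = i" by linarith
    then show False using i assms(3) by (metis less_not_refl order.asym)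
  qed
  moreover have "(LEAST k. 0 < a1 k) \<le> i"
    using i(3) by (intro Least_le) simp
  ultimately show ?thesis by simp
qed

lemma mu_le:
  assumes "a1 \<in> Vnd n d" "a2 \<in> Vnd n d" "\<not> lex_less n a2 a1"
  shows "(LEAST k. 0 < a2 k) \<le> (LEAST k. 0 < a1 k)"
proof -
  define m1 where "m1 = (LEAST k. 0 < a1 k)"
  define m2 where "m2 = (LEAST k. 0 < a2 k)"
  have p1: "0 < a1 m1" "m1 < n" "\<forall>k<m1. a1 k = 0" unfolding m1_def using mu_props[OF assms(1)] by blast+
  have p2: "\<forall>k<m2. a2 k = 0" unfolding m2_def using mu_props[OF assms(2)] by blast
  have "m2 \<le> m1"
  proof (rule ccontr)
    assume "\<not> m2 \<le> m1"
    then have lt: "m1 < m2" by simp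
    have "lex_less n a2 a1"
      unfolding lex_less_def
    proof (intro exI[of _ m1] conjI allI impI)
      show "m1 < n" by (rule p1(2))
    next
      fix j assume "j < m1"
      then show "a2 j = a1 j" using p1(3) p2 lt by simp
    next
      show "a2 m1 < a1 m1" using p1(1) p2 lt by simp
    qed
    then show False using assms(3) by simp
  qed
  then show ?thesis unfolding m1_def m2_def .
qed

lemma core:
  assumes a1V: "a1 \<in> Vnd n d" and a2V: "a2 \<in> Vnd n d" and amV: "am \<in> Vnd n d"
    and bV: "b \<in> Vnd n d"
    and bA: "b \<noteq> A" and lb: "lex_less n b a1" and n21: "\<not> lex_less n a2 a1"
    and Mz: "\<forall>k\<ge>n. M k = 0" and Dz: "\<forall>k\<ge>n. D k = 0"
    and Ma2: "\<forall>k. a2 k \<le> M k" and Dam: "\<forall>k. am k \<le> D k"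
    and bw: "\<forall>k. b k \<le> a1 k + M k + am k"
    and P: "\<forall>x\<in>Vnd n d. (\<forall>k. x k \<le> a1 k + M k) \<and> lex_less n x a1 \<longrightarrow> x = A"
    and S: "\<forall>x\<in>Vnd n d. (\<forall>k. x k \<le> a2 k + D k) \<and> lex_less n x a2 \<longrightarrow> x = A"
  shows False
proof -
  define m1 where "m1 = (LEAST k. 0 < a1 k)"
  define m2 where "m2 = (LEAST k. 0 < a2 k)"
  have m2b: "\<forall>k<m2. a2 k = 0" unfolding m2_def by (rule mu_props(3)[OF a2V])
  have m1b: "\<forall>k<m1. a1 k = 0" unfolding m1_def by (rule mu_props(3)[OF a1V])
  have m21: "m2 \<le> m1" unfolding m1_def m2_def by (rule mu_le[OF a1V a2V n21])
  have "\<exists>t. a1 t + M t < b t"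
  proof (rule ccontr)
    assume "\<nexists>t. a1 t + M t < b t"
    then have "\<forall>k. b k \<le> a1 k + M k" by (simp add: not_less)
    moreover have "(\<forall>k. b k \<le> a1 k + M k) \<and> lex_less n b a1 \<longrightarrow> b = A"
      using P bV by blast
    ultimately have "b = A" using lb by blast
    then show False using bA by simp
  qed
  then obtain t where t: "a1 t + M t < b t" by blast
  have amt: "1 \<le> am t" using t bw[rule_format, of t] by simp
  have Dt: "1 \<le> D t" using amt Dam[rule_format, of t] by simp
  have m1t: "m1 < t" unfolding m1_def by (rule surplus_gt[OF lb a1V]) (use t in simp)
  have m2t: "m2 < t" using m21 m1t by simp
  note K1a = K1[OF a1V Mz P m1_def] and K2a = K2[OF a1V Mz P m1_def]
    and K3a = K3[OF a1V Mz P m1_def] and K4a = K4[OF a1V Mz P m1_def]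
  note K1b = K1[OF a2V Dz S m2_def] and K4b = K4[OF a2V Dz S m2_def]
  have A2: "A = (\<lambda>k. a2 k - (if k = m2 then 1 else 0) + (if k = t then 1 else 0))"
    by (rule K1b[OF m2t Dt])
  have A2k: "A k = a2 k - (if k = m2 then 1 else 0) + (if k = t then 1 else 0)" for k
    using fun_cong[OF A2, of k] by simp
  have a2gap: "a2 k = 0" if "m2 < k" "k < t" for k using K4b[OF that Dt] .
  have "\<exists>j1. m2 < j1 \<and> 0 < a2 j1"
  proof (rule ccontr)
    assume "\<nexists>j1. m2 < j1 \<and> 0 < a2 j1"
    then have z: "a2 k = 0" if "k \<noteq> m2" for k using m2b that by (cases "k < m2") auto
    have "\<forall>k. k \<noteq> m2 \<and> k \<noteq> t \<longrightarrow> A k = 0" using A2k z by simp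
    moreover have "A t \<le> 2" using A2k z m2t by simp
    ultimately show False using E2[of m2 t] m2t by simp
  qed
  then obtain j1 where j1: "m2 < j1" "0 < a2 j1" by blast
  have tj1: "t \<le> j1"
  proof (rule ccontr)
    assume "\<not> t \<le> j1"
    then have "a2 j1 = 0" using a2gap[OF j1(1)] by simp
    then show False using j1(2) by simp
  qed
  have m1j1: "m1 < j1" using m1t tj1 by simp
  have Mj1: "1 \<le> M j1" using j1(2) Ma2[rule_format, of j1] by simp
  have A1: "A = (\<lambda>k. a1 k - (if k = m1 then 1 else 0) + (if k = j1 then 1 else 0))"
    by (rule K1a[OF m1j1 Mj1])
  have A1k: "A k = a1 k - (if k = m1 then 1 else 0) + (if k = j1 then 1 else 0)" for k
    using fun_cong[OF A1, of k] by simp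
  have "M j1 \<le> 1" by (rule K3a[OF m1j1 Mj1])
  then have a2j1: "a2 j1 = 1" using j1(2) Ma2[rule_format, of j1] by simp
  have supp2: "a2 k = 0" if "k \<noteq> m2" "k \<noteq> j1" for k
  proof (rule ccontr)
    assume nz: "a2 k \<noteq> 0"
    then have "m2 < k" using m2b that by (cases "k < m2") auto
    then have "t \<le> k" using a2gap[of k] nz by (cases "t \<le> k") auto
    then have "m1 < k" using m1t by simp
    moreover have "1 \<le> M k" using nz Ma2[rule_format, of k] by simp
    ultimately have "k = j1" using K2a[OF _ _ m1j1 Mj1] by blast
    then show False using that by simp
  qed
  show False
  proof (cases "m2 < m1")
    case True
    have Am2: "A m2 = 0" using A1k[of m2] m1b True j1(1) by simp
    have "\<forall>k. k \<noteq> t \<and> k \<noteq> j1 \<longrightarrow> A k = 0"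
    proof (intro allI impI)
      fix k assume k: "k \<noteq> t \<and> k \<noteq> j1"
      show "A k = 0"
      proof (cases "k = m2")
        case True then show ?thesis using Am2 by simp
      next
        case False then show ?thesis using A2k[of k] supp2[of k] k by simp
      qed
    qed
    moreover have "A j1 \<le> 2" using A2k[of j1] a2j1 j1(1) by simp
    ultimately show False using E2[of t j1] tj1 by simp
  next
    case False
    then have eq: "m1 = m2" using m21 by simp
    have tj: "t = j1"
    proof (rule ccontr)
      assume "t \<noteq> j1"
      then have "t < j1" using tj1 by simp
      then have "a1 t = 0" using K4a[OF m1t _ Mj1] by simp
      then have "A t = 0" using A1k[of t] m1t \<open>t < j1\<close> by simp
      moreover have "A t \<ge> 1" using A2k[of t] by simp
      ultimately show False by simp
    qed
    have "\<forall>k. k \<noteq> m2 \<and> k \<noteq> t \<longrightarrow> A k = 0"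
      using A2k supp2 tj by simp
    moreover have "A t \<le> 2" using A2k[of t] a2j1 tj m2t by simp
    ultimately show False using E2[of m2 t] m2t by simp
  qed
qed

end


lemma subvec:
  fixes v :: "nat \<Rightarrow> nat"
  assumes vz: "\<forall>k\<ge>n. v k = 0"
  shows "s \<le> (\<Sum>i<n. v i) \<Longrightarrow> \<exists>u. (\<forall>k. u k \<le> v k) \<and> u \<in> Vnd n s"
proof (induction s)
  case 0
  show ?case by (intro exI[of _ "\<lambda>_. 0"]) (simp add: Vnd_def)
next
  case (Suc s)
  then obtain u where u: "\<forall>k. u k \<le> v k" "u \<in> Vnd n s" by auto
  have su: "(\<Sum>i<n. u i) = s" using u(2) by (simp add: Vnd_def)
  have "\<exists>i<n. u i < v i"
  proof (rule ccontr)
    assume "\<not> (\<exists>i<n. u i < v i)"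
    then have "\<forall>i<n. v i \<le> u i" using not_less by blast
    then have "(\<Sum>i<n. v i) \<le> (\<Sum>i<n. u i)" by (intro sum_mono) simp
    then show False using su Suc.prems by simp
  qed
  then obtain i where i: "i < n" "u i < v i" by blast
  let ?u = "\<lambda>k. u k + (if k = i then 1 else 0)"
  have "?u \<in> Vnd n (Suc s)"
  proof (rule Vnd_I)
    fix k assume "n \<le> k" then show "?u k = 0" using u(2) i(1) by (simp add: Vnd_def)
  next
    show "(\<Sum>k<n. ?u k) = Suc s" using su i(1) by (simp add: sum.distrib sum.delta')
  qed
  moreover have "\<forall>k. ?u k \<le> v k" using u(1) i(2) by (simp add: Suc_le_eq)
  ultimately show ?case by (intro exI[of _ ?u]) simp
qed

lemma diffV:
  assumes "\<forall>k. u k \<le> v k" "u \<in> Vnd n s" "v \<in> Vnd n t"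
  shows "(\<lambda>k. v k - u k) \<in> Vnd n (t - s)"
proof (rule Vnd_I)
  fix k assume "n \<le> k" then show "v k - u k = 0" using assms(3) by (simp add: Vnd_def)
next
  have "(\<Sum>k<n. v k - u k) = (\<Sum>k<n. v k) - (\<Sum>k<n. u k)"
    by (rule sum_subtractf_nat) (use assms(1) in simp)
  then show "(\<Sum>k<n. v k - u k) = t - s" using assms(2,3) by (simp add: Vnd_def)
qed

context AS
begin

lemma chains:
  assumes "2 \<le> k"
  shows "v \<in> Vnd n (k * d) \<Longrightarrow> \<exists>ls. length ls = k \<and> set ls \<subseteq> Vnd n d - {A} \<and> vsum ls = v"
  using assms
proof (induction k arbitrary: v rule: nat_induct_at_least)
  case base
  then have "v \<in> {vadd x y | x y. x \<in> Vnd n d - {A} \<and> y \<in> Vnd n d - {A}}" using GG by simp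
  then obtain x y where xy: "v = vadd x y" "x \<in> Vnd n d - {A}" "y \<in> Vnd n d - {A}" by blast
  show ?case
    by (intro exI[of _ "[x, y]"]) (use xy in \<open>auto simp: vadd_def intro!: ext\<close>)
next
  case (Suc k)
  have vz: "\<forall>k\<ge>n. v k = 0" using Suc.prems by (simp add: Vnd_def)
  have "2 * d \<le> (\<Sum>i<n. v i)" using Suc.prems Suc.hyps by (simp add: Vnd_def)
  then obtain u where u: "\<forall>k. u k \<le> v k" "u \<in> Vnd n (2 * d)" using subvec[OF vz] by blast
  then have "u \<in> {vadd x y | x y. x \<in> Vnd n d - {A} \<and> y \<in> Vnd n d - {A}}" using GG by simp
  then obtain x y where xy: "u = vadd x y" "x \<in> Vnd n d - {A}" "y \<in> Vnd n d - {A}" by blast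
  have xv: "\<forall>k. x k \<le> v k" using u(1) xy(1) by (simp add: vadd_def) (meson le_add1 le_trans)
  have "(\<lambda>i. v i - x i) \<in> Vnd n (Suc k * d - d)"
    using diffV[OF xv] xy(2) Suc.prems by blast
  then have "(\<lambda>i. v i - x i) \<in> Vnd n (k * d)" by simp
  then obtain ls where ls: "length ls = k" "set ls \<subseteq> Vnd n d - {A}" "vsum ls = (\<lambda>i. v i - x i)"
    using Suc.IH by blast
  show ?case
  proof (intro exI[of _ "x # ls"] conjI)
    show "vsum (x # ls) = v"
    proof (rule ext)
      fix i show "vsum (x # ls) i = v i" using ls(3) xv by (simp add: fun_eq_iff)
    qed
  qed (use ls xy in auto)
qed


lemma split2:
  assumes "Suc t < length sp"
  shows "sp = take t sp @ [sp ! t, sp ! Suc t] @ drop (Suc (Suc t)) sp"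
proof -
  have "drop t sp = sp ! t # sp ! Suc t # drop (Suc (Suc t)) sp"
    using assms by (simp add: Cons_nth_drop_Suc)
  then show ?thesis by (metis append_Cons append_Nil append_take_drop_id)
qed

lemma segment:
  assumes spV: "set sp \<subseteq> Vnd n d" and spl: "length sp = m" and m4: "4 \<le> m"
    and sqV: "set sq \<subseteq> Vnd n d" and sql: "length sq = m" and sqs: "vsum sq = vsum sp"
    and lt: "adeg A sq < adeg A sp \<or> (adeg A sq = adeg A sp \<and> seq_less n sq sp)"
  shows "\<exists>sp'. set sp' \<subseteq> Vnd n d \<and> length sp' = m \<and> vsum sp' = vsum sp
    \<and> (adeg A sp' < adeg A sp \<or> (adeg A sp' = adeg A sp \<and> seq_less n sp' sp))
    \<and> (\<exists>r. 1 \<le> r \<and> r \<le> m - 1 \<and> node sp' r = node sp r)"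
proof (cases "A \<in> set sp")
  case True
  then obtain t where t: "t < m" "sp ! t = A" using spl by (metis in_set_conv_nth)
  define t' where "t' = (if Suc t < m then t else t - 1)"
  have t'm: "Suc t' < m" using t m4 unfolding t'_def by auto
  have t'A: "sp ! t' = A \<or> sp ! Suc t' = A" using t m4 unfolding t'_def by auto
  define pre where "pre = take t' sp"
  define post where "post = drop (Suc (Suc t')) sp"
  define X where "X = [sp ! t', sp ! Suc t']"
  have spd: "sp = pre @ X @ post" unfolding pre_def post_def X_def
    by (rule split2) (use t'm spl in simp)
  have XV: "sp ! t' \<in> Vnd n d" "sp ! Suc t' \<in> Vnd n d" using spV t'm spl by auto
  have "vadd (sp ! t') (sp ! Suc t') \<in> Vnd n (2 * d)" using vadd_Vnd[OF XV] by (simp add: mult_2)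
  then have "vadd (sp ! t') (sp ! Suc t') \<in> {vadd x y | x y. x \<in> Vnd n d - {A} \<and> y \<in> Vnd n d - {A}}"
    using GG by simp
  then obtain x y where xy: "vadd (sp ! t') (sp ! Suc t') = vadd x y" "x \<in> Vnd n d - {A}" "y \<in> Vnd n d - {A}"
    by blast
  define sp' where "sp' = pre @ [x, y] @ post"
  have lpre: "length pre = t'" unfolding pre_def using t'm spl by simp
  have xyk: "x k + y k = (sp ! t') k + (sp ! Suc t') k" for k using fun_cong[OF xy(1), of k] by (simp add: vadd_def)
  have lX: "length X = 2" unfolding X_def by simp
  have vX: "vsum [x, y] k = vsum X k" for k using xyk by (simp add: X_def)
  have cX: "count_list X A \<ge> 1" using t'A unfolding X_def by auto
  have XV2: "set X \<subseteq> Vnd n d" using XV unfolding X_def by simp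
  have ppV: "set pre \<subseteq> Vnd n d" "set post \<subseteq> Vnd n d" using spV spd by auto
  show ?thesis
  proof (intro exI[of _ sp'] conjI)
    show "set sp' \<subseteq> Vnd n d" using ppV xy unfolding sp'_def by auto
    show "length sp' = m" using spl lX unfolding sp'_def by (simp add: spd)
    show "vsum sp' = vsum sp"
    proof (rule ext)
      fix k show "vsum sp' k = vsum sp k" using vX[of k] by (simp add: sp'_def spd)
    qed
    have "x \<noteq> A" "y \<noteq> A" using xy by auto
    then show "adeg A sp' < adeg A sp \<or> (adeg A sp' = adeg A sp \<and> seq_less n sp' sp)"
      using cX unfolding adeg_def sp'_def by (simp add: spd)
    show "\<exists>r. 1 \<le> r \<and> r \<le> m - 1 \<and> node sp' r = node sp r"
    proof (cases "t' = 0")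
      case True
      show ?thesis
      proof (intro exI[of _ 2] conjI)
        show "node sp' 2 = node sp 2"
        proof (rule ext)
          fix k
          have "node sp' 2 k = node pre 2 k + node [x, y] 2 k + node post 0 k"
            unfolding sp'_def node_append3 using lpre True by simp
          moreover have "node sp 2 k = node pre 2 k + node X 2 k + node post 0 k"
          proof -
            have "node sp 2 k = node pre 2 k + node X (2 - length pre) k + node post (2 - length pre - length X) k"
              by (subst spd) (rule node_append3)
            then show ?thesis using lpre True lX by simp
          qed
          moreover have "node X 2 k = node [x, y] 2 k" using vX[of k] lX by (simp add: node_vsum)
          ultimately show "node sp' 2 k = node sp 2 k" by simp
        qed
      qed (use m4 in auto)
    next
      case False
      show ?thesis
      proof (intro exI[of _ 1] conjI)
        show "node sp' 1 = node sp 1"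
        proof (rule ext)
          fix k
          have "node sp' 1 k = node pre 1 k + node [x, y] 0 k + node post 0 k"
            unfolding sp'_def node_append3 using lpre False by simp
          moreover have "node sp 1 k = node pre 1 k + node X 0 k + node post 0 k"
          proof -
            have "node sp 1 k = node pre 1 k + node X (1 - length pre) k + node post (1 - length pre - length X) k"
              by (subst spd) (rule node_append3)
            then show ?thesis using lpre False lX by simp
          qed
          ultimately show "node sp' 1 k = node sp 1 k" by (simp add: node_vsum)
        qed
      qed (use m4 in auto)
    qed
  qed
next
  case False
  have ad0: "adeg A sp = 0" using False by (simp add: adeg_def)
  then have sq0: "adeg A sq = 0" and sqlt: "seq_less n sq sp" using lt by auto
  have Asq: "A \<notin> set sq" using sq0 by (simp add: adeg_def count_list_0_iff)
  obtain a1 sp1 where sp1: "sp = a1 # sp1" using spl m4 by (cases sp) auto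
  obtain a2 rest where "sp1 = a2 # rest" using spl m4 sp1 by (cases sp1) auto
  with sp1 have spd: "sp = a1 # a2 # rest" by simp
  obtain b sq' where sqd: "sq = b # sq'" using sql m4 by (cases sq) auto
  have a1V: "a1 \<in> Vnd n d" and a2V: "a2 \<in> Vnd n d" using spV spd by auto
  show ?thesis
  proof (cases "lex_less n a2 a1")
    case True
    show ?thesis
    proof (intro exI[of _ "a2 # a1 # rest"] conjI)
      show "\<exists>r. 1 \<le> r \<and> r \<le> m - 1 \<and> node (a2 # a1 # rest) r = node sp r"
        by (intro exI[of _ 2]) (use m4 in \<open>auto simp: spd node_vsum intro!: ext\<close>)
    qed (use spV spl True False in \<open>auto simp: spd adeg_def intro!: ext\<close>)
  next
    case n21: False
    show ?thesis
    proof (cases "b = a1")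
      case True
      show ?thesis
      proof (intro exI[of _ sq] conjI)
        show "\<exists>r. 1 \<le> r \<and> r \<le> m - 1 \<and> node sq r = node sp r"
          by (intro exI[of _ 1]) (use m4 True in \<open>auto simp: spd sqd node_vsum intro!: ext\<close>)
      qed (use sqV sql sqs sq0 sqlt ad0 in auto)
    next
      case bne: False
      have lb: "lex_less n b a1" using sqlt bne by (simp add: sqd spd)
      have bV: "b \<in> Vnd n d" using sqV sqd by auto
      have bA: "b \<noteq> A" using Asq sqd by auto
      have "rest \<noteq> []" using spl m4 spd by auto
      then obtain mid am where restd: "rest = mid @ [am]" by (metis append_butlast_last_id)
      have lmid: "length mid = m - 3" using spl spd restd by simp
      have amV: "am \<in> Vnd n d" and midV: "set mid \<subseteq> Vnd n d" using spV spd restd by auto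
      define M where "M = (\<lambda>k. a2 k + vsum mid k)"
      define D where "D = (\<lambda>k. vsum mid k + am k)"
      have midz: "\<forall>k\<ge>n. vsum mid k = 0" using vsum_Vnd[OF midV] by (simp add: Vnd_def)
      have Mz: "\<forall>k\<ge>n. M k = 0" using midz a2V by (simp add: M_def Vnd_def)
      have Dz: "\<forall>k\<ge>n. D k = 0" using midz amV by (simp add: D_def Vnd_def)
      have m1e: "m - 1 = Suc (Suc (m - 3))" using m4 by simp
      have ar: "(m - 1) * d = d + (d + (m - 3) * d)" by (subst m1e) simp
      have W1V: "vsum (a1 # a2 # mid) \<in> Vnd n ((m - 1) * d)"
        using vsum_Vnd[of "a1 # a2 # mid" n d] a1V a2V midV lmid ar by simp
      have W2V: "vsum (a2 # mid @ [am]) \<in> Vnd n ((m - 1) * d)"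
        using vsum_Vnd[of "a2 # mid @ [am]" n d] a2V amV midV lmid ar by (simp add: algebra_simps)
      have m2: "2 \<le> m - 2" using m4 by simp
      show ?thesis
      proof (cases "\<exists>x\<in>Vnd n d. x \<noteq> A \<and> (\<forall>k. x k \<le> a1 k + M k) \<and> lex_less n x a1")
        case True
        then obtain x where x: "x \<in> Vnd n d" "x \<noteq> A" "\<forall>k. x k \<le> a1 k + M k" "lex_less n x a1" by blast
        have xle: "\<forall>k. x k \<le> vsum (a1 # a2 # mid) k" using x(3) by (simp add: M_def add.assoc)
        have "(\<lambda>k. vsum (a1 # a2 # mid) k - x k) \<in> Vnd n ((m - 1) * d - d)"
          using diffV[OF xle x(1) W1V] .
        moreover have "(m - 1) * d - d = (m - 2) * d" using m4 by (simp add: diff_mult_distrib)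
        ultimately have "(\<lambda>k. vsum (a1 # a2 # mid) k - x k) \<in> Vnd n ((m - 2) * d)" by simp
        then obtain ls where ls: "length ls = m - 2" "set ls \<subseteq> Vnd n d - {A}"
          "vsum ls = (\<lambda>k. vsum (a1 # a2 # mid) k - x k)"
          using chains[OF m2] by blast
        have lsk: "vsum ls k = vsum (a1 # a2 # mid) k - x k" for k using ls(3) by simp
        show ?thesis
        proof (intro exI[of _ "x # ls @ [am]"] conjI)
          show "set (x # ls @ [am]) \<subseteq> Vnd n d" using x ls amV by auto
          show "length (x # ls @ [am]) = m" using ls m4 by simp
          show "vsum (x # ls @ [am]) = vsum sp"
          proof (rule ext)
            fix k have "x k \<le> vsum (a1 # a2 # mid) k" using xle by blast
            then show "vsum (x # ls @ [am]) k = vsum sp k" by (simp add: lsk spd restd)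
          qed
          have "A \<notin> set (x # ls @ [am])" using x ls False spd restd by auto
          then have "adeg A (x # ls @ [am]) = 0" unfolding adeg_def by (rule count_notin)
          then show "adeg A (x # ls @ [am]) < adeg A sp \<or>
              (adeg A (x # ls @ [am]) = adeg A sp \<and> seq_less n (x # ls @ [am]) sp)"
            using ad0 x(4) by (simp add: spd)
          show "\<exists>r. 1 \<le> r \<and> r \<le> m - 1 \<and> node (x # ls @ [am]) r = node sp r"
          proof (intro exI[of _ "m - 1"] conjI)
            have "m - 1 = length (x # ls)" using ls(1) m4 by simp
            then have tk1: "take (m - 1) (x # ls @ [am]) = x # ls"
              by (metis append_Cons append_eq_conv_conj)
            have "m - 1 = length (a1 # a2 # mid)" using lmid m4 by simp
            then have tk2: "take (m - 1) sp = a1 # a2 # mid" unfolding spd restd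
              by (metis append_Cons append_eq_conv_conj)
            show "node (x # ls @ [am]) (m - 1) = node sp (m - 1)"
            proof (rule ext)
              fix k have "x k \<le> vsum (a1 # a2 # mid) k" using xle by blast
              then show "node (x # ls @ [am]) (m - 1) k = node sp (m - 1) k"
                unfolding node_vsum tk1 tk2 by (simp add: lsk)
            qed
          qed (use m4 in auto)
        qed
      next
        case noP: False
        show ?thesis
        proof (cases "\<exists>x\<in>Vnd n d. x \<noteq> A \<and> (\<forall>k. x k \<le> a2 k + D k) \<and> lex_less n x a2")
          case True
          then obtain x where x: "x \<in> Vnd n d" "x \<noteq> A" "\<forall>k. x k \<le> a2 k + D k" "lex_less n x a2" by blast
          have xle: "\<forall>k. x k \<le> vsum (a2 # mid @ [am]) k" using x(3) by (simp add: D_def add.assoc)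
          have "(\<lambda>k. vsum (a2 # mid @ [am]) k - x k) \<in> Vnd n ((m - 1) * d - d)"
            using diffV[OF xle x(1) W2V] .
          moreover have "(m - 1) * d - d = (m - 2) * d" using m4 by (simp add: diff_mult_distrib)
          ultimately have "(\<lambda>k. vsum (a2 # mid @ [am]) k - x k) \<in> Vnd n ((m - 2) * d)" by simp
          then obtain ls where ls: "length ls = m - 2" "set ls \<subseteq> Vnd n d - {A}"
            "vsum ls = (\<lambda>k. vsum (a2 # mid @ [am]) k - x k)"
            using chains[OF m2] by blast
          have lsk: "vsum ls k = vsum (a2 # mid @ [am]) k - x k" for k using ls(3) by simp
          show ?thesis
          proof (intro exI[of _ "a1 # x # ls"] conjI)
            show "set (a1 # x # ls) \<subseteq> Vnd n d" using x ls a1V by auto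
            show "length (a1 # x # ls) = m" using ls m4 by simp
            show "vsum (a1 # x # ls) = vsum sp"
            proof (rule ext)
              fix k have "x k \<le> vsum (a2 # mid @ [am]) k" using xle by blast
              then show "vsum (a1 # x # ls) k = vsum sp k" by (simp add: lsk spd restd)
            qed
            have "A \<notin> set (a1 # x # ls)" using x ls False spd by auto
            then have "adeg A (a1 # x # ls) = 0" unfolding adeg_def by (rule count_notin)
            then show "adeg A (a1 # x # ls) < adeg A sp \<or>
                (adeg A (a1 # x # ls) = adeg A sp \<and> seq_less n (a1 # x # ls) sp)"
              using ad0 x(4) by (simp add: spd lex_irrefl)
            show "\<exists>r. 1 \<le> r \<and> r \<le> m - 1 \<and> node (a1 # x # ls) r = node sp r"
              by (intro exI[of _ 1]) (use m4 in \<open>auto simp: spd node_vsum intro!: ext\<close>)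
          qed
        next
          case noS: False
          have P: "\<forall>x\<in>Vnd n d. (\<forall>k. x k \<le> a1 k + M k) \<and> lex_less n x a1 \<longrightarrow> x = A"
            using noP by blast
          have S: "\<forall>x\<in>Vnd n d. (\<forall>k. x k \<le> a2 k + D k) \<and> lex_less n x a2 \<longrightarrow> x = A"
            using noS by blast
          have bw: "\<forall>k. b k \<le> a1 k + M k + am k"
          proof
            fix k
            have "b k \<le> vsum sq k" using sqd by simp
            also have "\<dots> = vsum sp k" using sqs by simp
            finally show "b k \<le> a1 k + M k + am k" by (simp add: spd restd M_def)
          qed
          show ?thesis
            using core[OF a1V a2V amV bV bA lb n21 Mz Dz _ _ bw P S]
            by (simp add: M_def D_def)
        qed
      qed
    qed
  qed
qed

end


lemma node_Suc: "t < length ls \<Longrightarrow> node ls (Suc t) x = node ls t x + (ls ! t) x"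
  by (simp add: node_vsum take_Suc_conv_app_nth)

lemma node_full: "node ls (length ls) = vsum ls"
  by (simp add: node_vsum)

lemma node_mid_eq:
  assumes "length X = length Y" "vsum X = vsum Y" "l \<le> length P \<or> length P + length X \<le> l"
  shows "node (P @ X @ B) l = node (P @ Y @ B) l"
proof (rule ext)
  fix x
  have "node X (l - length P) x = node Y (l - length P) x"
    using assms by (auto simp: node_vsum)
  then show "node (P @ X @ B) l x = node (P @ Y @ B) l x"
    using assms(1) by (simp add: node_append3)
qed

lemma node_mid_eq2:
  assumes "length X = length Y" "node X r = node Y r"
  shows "node (P @ X @ B) (length P + r) = node (P @ Y @ B) (length P + r)"
proof (rule ext)
  fix x
  have "node X r x = node Y r x" using assms by simp
  moreover have "node B (length P + r - length P - length X) x = node B (length P + r - length P - length Y) x"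
    using assms(1) by simp
  ultimately show "node (P @ X @ B) (length P + r) x = node (P @ Y @ B) (length P + r) x"
    by (simp add: node_append3)
qed

lemma adeg_mid: "adeg a (P @ X @ B) = adeg a P + adeg a X + adeg a B"
  by (simp add: adeg_def)

lemma facet_less_mid:
  assumes "length X = length Y"
  shows "facet_less n a (P @ X @ B) (P @ Y @ B) = (adeg a X < adeg a Y \<or> (adeg a X = adeg a Y \<and> seq_less n X Y))"
  using assms by (simp add: facet_less_def adeg_mid seq_less_mid)

theorem lemma3p5:
  fixes n d :: nat and a lam :: "nat \<Rightarrow> nat" and p :: "(nat \<Rightarrow> nat) list" and i j :: nat
  assumes "n \<ge> 2" and "d \<ge> 2"
    and "a \<in> Vnd n d"
    and "\<forall>s t. s \<le> t \<and> t < n \<longrightarrow> a s \<le> a t"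
    and "a \<noteq> (\<lambda>s. if s = n - 1 then d else 0)"
    and "a \<noteq> (\<lambda>s. if s = n - 2 then 1 else if s = n - 1 then d - 1 else 0)"
    and "a \<noteq> (\<lambda>s. if s = n - 2 then 2 else if s = n - 1 then d - 2 else 0)"
    and "{vadd x y | x y. x \<in> Vnd n d - {a} \<and> y \<in> Vnd n d - {a}} = Vnd n (2 * d)"
    and "lam \<in> gen_semigroup (Vnd n d - {a})"
    and "is_chain n d lam p"
    and "adeg a p \<ge> 1"
    and "1 \<le> i" and "j \<le> length p - 1"
    and "facet_Fless_cap n d a lam p (open_chain p - {node p l | l. l \<in> {i..j}})"
  shows "card {i..j} \<le> 2"
proof (rule ccontr)
  assume "\<not> card {i..j} \<le> 2"
  then have ij: "i + 2 \<le> j" by simp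
  interpret AS n d a using assms(1-8) by unfold_locales
  define S where "S = open_chain p - {node p l | l. l \<in> {i..j}}"
  define k where "k = length p"
  have facet: "face_Fless_cap n d a lam p S"
    and maxi: "\<And>T. face_Fless_cap n d a lam p T \<Longrightarrow> S \<subseteq> T \<Longrightarrow> T = S"
    using assms(14) unfolding facet_Fless_cap_def S_def by blast+
  obtain q where qc: "is_chain n d lam q" and qlt: "facet_less n a q p" and Sq: "S \<subseteq> open_chain q"
    using facet unfolding face_Fless_cap_def by blast
  have pV: "set p \<subseteq> Vnd n d" and pl: "vsum p = lam"
    using assms(10) by (auto simp: is_chain_def node_full)
  have qV: "set q \<subseteq> Vnd n d" and ql: "vsum q = lam"
    using qc by (auto simp: is_chain_def node_full)
  have d0: "0 < d" using assms(2) by simp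
  have lq: "length q = k" unfolding k_def using mass_eq_length[OF qV pV _ d0] pl ql by simp
  have jk: "j + 1 \<le> k" using assms(13) ij unfolding k_def by simp
  have nodeq: "node q l = node p l" if "l \<le> k" "l < i \<or> j < l" for l
  proof (cases "l = 0 \<or> l = k")
    case True
    then show ?thesis
    proof
      assume "l = 0" then show ?thesis by (simp add: node_vsum)
    next
      assume "l = k"
      then have "node q l = vsum q" "node p l = vsum p" using lq node_full[of q] node_full[of p]
        by (simp_all add: k_def)
      then show ?thesis using pl ql by simp
    qed
  next
    case False
    then have l1: "1 \<le> l" "l \<le> k - 1" using that by auto
    have "node p l \<notin> {node p l | l. l \<in> {i..j}}"
    proof
      assume "node p l \<in> {node p l | l. l \<in> {i..j}}"
      then obtain l' where l': "l' \<in> {i..j}" "node p l = node p l'" by blast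
      have "l = l'" by (rule node_inj[OF pV pV _ _ l'(2) d0]) (use that l' jk in \<open>auto simp: k_def\<close>)
      then show False using l' that by auto
    qed
    moreover have "node p l \<in> open_chain p" using l1 unfolding open_chain_def k_def by blast
    ultimately have "node p l \<in> S" unfolding S_def by blast
    then have "node p l \<in> open_chain q" using Sq by blast
    then obtain l' where l': "node p l = node q l'" "1 \<le> l'" "l' \<le> length q - 1"
      unfolding open_chain_def by blast
    have "l = l'" by (rule node_inj[OF pV qV _ _ l'(1) d0]) (use that l' lq in \<open>auto simp: k_def\<close>)
    then show ?thesis using l' by simp
  qed
  have linkq: "q ! t = p ! t" if "t < k" "Suc t < i \<or> j < t" for t
  proof (rule ext)
    fix x
    have "node q (Suc t) x = node q t x + (q ! t) x" using node_Suc[of t q] that lq by simp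
    moreover have "node p (Suc t) x = node p t x + (p ! t) x" using node_Suc[of t p] that by (simp add: k_def)
    moreover have "node q (Suc t) = node p (Suc t)" by (rule nodeq) (use that in auto)
    moreover have "node q t = node p t" by (rule nodeq) (use that in auto)
    ultimately show "(q ! t) x = (p ! t) x" by simp
  qed
  define m where "m = j + 2 - i"
  define P where "P = take (i - 1) p"
  define B where "B = drop (j + 1) p"
  define sp where "sp = take m (drop (i - 1) p)"
  define sq where "sq = take m (drop (i - 1) q)"
  have m4: "4 \<le> m" unfolding m_def using ij by simp
  have lP: "length P = i - 1" unfolding P_def using jk assms(12) ij by (simp add: k_def)
  have lsp: "length sp = m" unfolding sp_def m_def using jk assms(12) ij by (simp add: k_def)
  have lsq: "length sq = m" unfolding sq_def m_def using jk assms(12) lq ij by simp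
  have im: "i - 1 + m = j + 1" unfolding m_def using ij assms(12) by simp
  have pd: "p = P @ sp @ B"
  proof -
    have "drop (i - 1) p = sp @ drop m (drop (i - 1) p)" unfolding sp_def
      by (rule append_take_drop_id[symmetric])
    moreover have "drop m (drop (i - 1) p) = B" unfolding B_def using im by (simp add: add.commute)
    ultimately show ?thesis unfolding P_def by (metis append_take_drop_id)
  qed
  have Pq: "take (i - 1) q = P"
  proof (rule nth_equalityI)
    show "length (take (i - 1) q) = length P" using lP lq jk assms(12) ij by simp
    fix t assume "t < length (take (i - 1) q)"
    then have t: "t < i - 1" "t < k" using lq by auto
    have "Suc t < i" using t by simp
    then have "q ! t = p ! t" using linkq[of t] t by blast
    then show "take (i - 1) q ! t = P ! t" unfolding P_def using t by simp
  qed
  have Bq: "drop (j + 1) q = B"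
  proof (rule nth_equalityI)
    show "length (drop (j + 1) q) = length B" unfolding B_def using lq k_def by simp
    fix t assume "t < length (drop (j + 1) q)"
    then have t: "j + 1 + t < k" using lq by auto
    then have "q ! (j + 1 + t) = p ! (j + 1 + t)" using linkq[of "j + 1 + t"] by simp
    then show "drop (j + 1) q ! t = B ! t" unfolding B_def using t lq by (simp add: k_def)
  qed
  have qd: "q = P @ sq @ B"
  proof -
    have "drop (i - 1) q = sq @ drop m (drop (i - 1) q)" unfolding sq_def
      by (rule append_take_drop_id[symmetric])
    moreover have "drop m (drop (i - 1) q) = B" using Bq im by (simp add: add.commute)
    ultimately show ?thesis using Pq by (metis append_take_drop_id)
  qed
  have spV: "set sp \<subseteq> Vnd n d" and PBV: "set P \<subseteq> Vnd n d" "set B \<subseteq> Vnd n d"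
    using pV pd by auto
  have sqV: "set sq \<subseteq> Vnd n d" using qV qd by auto
  have sqs: "vsum sq = vsum sp"
  proof (rule ext)
    fix x
    have "vsum q x = vsum p x" using pl ql by simp
    then show "vsum sq x = vsum sp x" by (simp add: pd qd)
  qed
  have lt: "adeg a sq < adeg a sp \<or> (adeg a sq = adeg a sp \<and> seq_less n sq sp)"
    using qlt lsp lsq by (simp add: pd qd facet_less_mid)
  from segment[OF spV lsp m4 sqV lsq sqs lt] obtain sp' r where
    sp': "set sp' \<subseteq> Vnd n d" "length sp' = m" "vsum sp' = vsum sp"
      "adeg a sp' < adeg a sp \<or> (adeg a sp' = adeg a sp \<and> seq_less n sp' sp)"
    and r: "1 \<le> r" "r \<le> m - 1" "node sp' r = node sp r"
    by blast
  define q' where "q' = P @ sp' @ B"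
  have q'V: "set q' \<subseteq> Vnd n d" using sp'(1) PBV unfolding q'_def by auto
  have lq': "length q' = k" unfolding q'_def k_def using sp'(2) lsp by (subst pd) simp
  have vq': "vsum q' = vsum p"
  proof (rule ext)
    fix x show "vsum q' x = vsum p x" using fun_cong[OF sp'(3), of x] unfolding q'_def by (subst pd) simp
  qed
  have q'c: "is_chain n d lam q'" unfolding is_chain_def using q'V vq' pl by (simp add: node_full)
  have q'lt: "facet_less n a q' p" unfolding q'_def using sp'(2,4) lsp by (subst pd) (simp add: facet_less_mid)
  have nq': "node q' l = node p l" if "l \<le> i - 1 \<or> j + 1 \<le> l" for l
  proof -
    have "node (P @ sp' @ B) l = node (P @ sp @ B) l"
      by (rule node_mid_eq) (use sp' lsp lP im that in auto)
    then show ?thesis unfolding q'_def by (subst pd)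
  qed
  define l0 where "l0 = i - 1 + r"
  have l0ij: "l0 \<in> {i..j}" unfolding l0_def using r assms(12) im m4 by auto
  have nl0: "node q' l0 = node p l0"
  proof -
    have "node (P @ sp' @ B) (length P + r) = node (P @ sp @ B) (length P + r)"
      by (rule node_mid_eq2) (use sp' lsp r in auto)
    then show ?thesis unfolding q'_def l0_def lP[symmetric] by (subst pd)
  qed
  define T where "T = insert (node p l0) S"
  have l0k: "1 \<le> l0" "l0 \<le> k - 1" using l0ij assms(12,13) by (auto simp: k_def)
  have "face_Fless_cap n d a lam p T"
    unfolding face_Fless_cap_def
  proof (intro conjI exI[of _ q'])
    show "T \<subseteq> open_chain p" unfolding T_def S_def open_chain_def using l0k by (auto simp: k_def)
    show "is_chain n d lam q'" by (rule q'c)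
    show "facet_less n a q' p" by (rule q'lt)
    show "T \<subseteq> open_chain q'"
    proof
      fix s assume "s \<in> T"
      then have "s = node p l0 \<or> s \<in> S" unfolding T_def by blast
      then show "s \<in> open_chain q'"
      proof (elim disjE)
        assume sl: "s = node p l0"
        have "node q' l0 \<in> open_chain q'" unfolding open_chain_def using l0k lq' by auto
        then show ?thesis using nl0 sl by simp
      next
        assume "s \<in> S"
        then obtain l where l: "s = node p l" "1 \<le> l" "l \<le> length p - 1" "l \<notin> {i..j}"
          unfolding S_def open_chain_def by blast
        then have "l \<le> i - 1 \<or> j + 1 \<le> l" by auto
        then have e: "node q' l = node p l" by (rule nq')
        have "node q' l \<in> open_chain q'" unfolding open_chain_def using l lq' by (auto simp: k_def)
        then show ?thesis using e l(1) by simp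
      qed
    qed
  qed
  moreover have "S \<subseteq> T" unfolding T_def by blast
  ultimately have "T = S" by (rule maxi)
  then have "node p l0 \<in> S" unfolding T_def by blast
  then show False unfolding S_def using l0ij by blast
qed


end
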